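(* Let $V$ be a finite nonempty set, $U,U'\subseteq V$ disjoint, $U''=V\setminus(U\cup U')$, $i\in U$, $j\in U'$, and $\hat x$ a maximally specific partial function on $P_V$. Let $P'_{01}=\{pq\in U\times U'\mid \hat x_{pi}\neq 0\neq \hat x_{jq}\}\setminus\hat x^{-1}(1)$ and $P'_{10}=\big((U''\times U)\cup(U'\times U)\cup(U'\times U'')\big)\setminus\hat x^{-1}(0)$. Then $P_{01}[\gamma^{ij|1}]\subseteq P'_{01}$ and $P_{10}[\gamma^{ij|1}]\subseteq P'_{10}$.
   Context: $P_V=\{pq\in V^2\mid p\neq q\}$; $X_V$ is the set of $x\in\{0,1\}^{P_V}$ with $x_{pq}+x_{qr}-x_{pr}\le 1$ for all pairwise distinct $p,q,r\in V$. A partial function $\tilde x$ is a map from $\operatorname{dom}(\tilde x)\subseteq P_V$ to $\{0,1\}$, $\tilde x^{-1}(b)$ the pairs mapped to $b$; convention $\tilde x_{aa}=1$ and $x_{aa}=1$ for all $a\in V$, $x\in X_V$. $X_V[\tilde x]=\{x\in X_V\mid x_{pq}=\tilde x_{pq}\ \forall pq\in\operatorname{dom}(\tilde x)\}$. A pair $pq$ is decided if $x_{pq}=x'_{pq}$ for all $x,x'\in X_V[\tilde x]$; $\tilde x$ is maximally specific if $X_V[\tilde x]\ne\emptyset$ and the decided pairs are exactly $\operatorname{dom}(\tilde x)$. For $A,B\subseteq V$ disjoint with $A\cup B=V$, the dicut map $\sigma_{A\times B}\colon X_V\to X_V$ sets $\sigma_{A\times B}(x)_{pq}=0$ if $pq\in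 A\times B$ and $=x_{pq}$ otherwise. For $ij\in P_V$, the join map $\sigma_{ij}\colon X_V\to X_V$ sets $\sigma_{ij}(x)_{pq}=1$ if $x_{pi}=x_{jq}=1$ and $=x_{pq}$ otherwise. Let $\gamma=\sigma_{ij}\circ\sigma_{(V\setminus U)\times U}\circ\sigma_{U'\times(V\setminus U')}$ and $\gamma^{ij|1}\colon X_V[\hat x]\to X_V$ with $\gamma^{ij|1}(x)=x$ if $x_{ij}=1$ and $\gamma^{ij|1}(x)=\gamma(x)$ if $x_{ij}=0$. For a map $\sigma\colon X_V[\hat x]\to X_V$ and $a,b\in\{0,1\}$, $P_{ab}[\sigma]=\{e\in P_V\mid\exists x\in X_V[\hat x]: x_e=a\wedge\sigma(x)_e=b\}$. *)

theory Defs
  imports Main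
begin

definition PV :: "'a set \<Rightarrow> ('a \<times> 'a) set" where
  "PV V = {(p, q). p \<in> V \<and> q \<in> V \<and> p \<noteq> q}"

definition xval :: "('a \<times> 'a \<Rightarrow> nat) \<Rightarrow> 'a \<Rightarrow> 'a \<Rightarrow> nat" where
  "xval x p q = (if p = q then 1 else x (p, q))"

definition XV :: "'a set \<Rightarrow> ('a \<times> 'a \<Rightarrow> nat) set" where
  "XV V = {x. (\<forall>e. e \<notin> PV V \<longrightarrow> x e = 0) \<and> (\<forall>e \<in> PV V. x e \<in> {0, 1}) \<and>
     (\<forall>p\<in>V. \<forall>q\<in>V. \<forall>r\<in>V. p \<noteq> q \<and> q \<noteq> r \<and> p \<noteq> r \<longrightarrow>
        x (p, q) + x (q, r) \<le> 1 + x (p, r))}"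

definition partial_fun :: "'a set \<Rightarrow> ('a \<times> 'a \<Rightarrow> nat option) \<Rightarrow> bool" where
  "partial_fun V xh \<longleftrightarrow> dom xh \<subseteq> PV V \<and> ran xh \<subseteq> {0, 1}"

definition pval :: "('a \<times> 'a \<Rightarrow> nat option) \<Rightarrow> 'a \<Rightarrow> 'a \<Rightarrow> nat option" where
  "pval xh p q = (if p = q then Some 1 else xh (p, q))"

definition XV_restr :: "'a set \<Rightarrow> ('a \<times> 'a \<Rightarrow> nat option) \<Rightarrow> ('a \<times> 'a \<Rightarrow> nat) set" where
  "XV_restr V xh = {x \<in> XV V. \<forall>e \<in> dom xh. xh e = Some (x e)}"

definition decided :: "'a set \<Rightarrow> ('a \<times> 'a \<Rightarrow> nat option) \<Rightarrow> 'a \<times> 'a \<Rightarrow> bool" where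
  "decided V xh e \<longleftrightarrow> (\<forall>x \<in> XV_restr V xh. \<forall>x' \<in> XV_restr V xh. x e = x' e)"

definition maximally_specific :: "'a set \<Rightarrow> ('a \<times> 'a \<Rightarrow> nat option) \<Rightarrow> bool" where
  "maximally_specific V xh \<longleftrightarrow> XV_restr V xh \<noteq> {} \<and>
     {e \<in> PV V. decided V xh e} = dom xh"

definition dicut_map :: "'a set \<Rightarrow> 'a set \<Rightarrow> ('a \<times> 'a \<Rightarrow> nat) \<Rightarrow> ('a \<times> 'a \<Rightarrow> nat)" where
  "dicut_map A B x = (\<lambda>e. if e \<in> A \<times> B then 0 else x e)"

definition join_map :: "'a set \<Rightarrow> 'a \<Rightarrow> 'a \<Rightarrow> ('a \<times> 'a \<Rightarrow> nat) \<Rightarrow> ('a \<times> 'a \<Rightarrow> nat)" where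
  "join_map V i j x = (\<lambda>(p, q). if (p, q) \<in> PV V \<and> xval x p i = 1 \<and> xval x j q = 1
                                 then 1 else x (p, q))"

definition gamma :: "'a set \<Rightarrow> 'a set \<Rightarrow> 'a set \<Rightarrow> 'a \<Rightarrow> 'a \<Rightarrow>
    ('a \<times> 'a \<Rightarrow> nat) \<Rightarrow> ('a \<times> 'a \<Rightarrow> nat)" where
  "gamma V U U' i j = join_map V i j \<circ> dicut_map (V - U) U \<circ> dicut_map U' (V - U')"

definition gamma1 :: "'a set \<Rightarrow> 'a set \<Rightarrow> 'a set \<Rightarrow> 'a \<Rightarrow> 'a \<Rightarrow>
    ('a \<times> 'a \<Rightarrow> nat) \<Rightarrow> ('a \<times> 'a \<Rightarrow> nat)" where
  "gamma1 V U U' i j x = (if xval x i j = 1 then x else gamma V U U' i j x)"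

definition Pab :: "'a set \<Rightarrow> ('a \<times> 'a \<Rightarrow> nat option) \<Rightarrow> nat \<Rightarrow> nat \<Rightarrow>
    (('a \<times> 'a \<Rightarrow> nat) \<Rightarrow> ('a \<times> 'a \<Rightarrow> nat)) \<Rightarrow> ('a \<times> 'a) set" where
  "Pab V xh a b \<sigma> = {e \<in> PV V. \<exists>x \<in> XV_restr V xh. x e = a \<and> \<sigma> x e = b}"

end

theory Submission
  imports Defs
begin

theorem lemma6p4:
  fixes V U U' :: "'a set" and i j :: 'a and xh :: "'a \<times> 'a \<Rightarrow> nat option"
  assumes "finite V" and "V \<noteq> {}"
    and "U \<subseteq> V" and "U' \<subseteq> V" and "U \<inter> U' = {}"
    and "i \<in> U" and "j \<in> U'"
    and "partial_fun V xh" and "maximally_specific V xh"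
  shows "Pab V xh 0 1 (gamma1 V U U' i j) \<subseteq>
           {(p, q). (p, q) \<in> U \<times> U' \<and> pval xh p i \<noteq> Some 0 \<and> pval xh j q \<noteq> Some 0}
             - {e. xh e = Some 1} \<and>
         Pab V xh 1 0 (gamma1 V U U' i j) \<subseteq>
           ((V - (U \<union> U')) \<times> U \<union> U' \<times> U \<union> U' \<times> (V - (U \<union> U')))
             - {e. xh e = Some 0}"
proof
  show "Pab V xh 0 1 (gamma1 V U U' i j) \<subseteq>
           {(p, q). (p, q) \<in> U \<times> U' \<and> pval xh p i \<noteq> Some 0 \<and> pval xh j q \<noteq> Some 0}
             - {e. xh e = Some 1}"
  proof
    fix e assume "e \<in> Pab V xh 0 1 (gamma1 V U U' i j)"
    then obtain p q x where e: "e = (p, q)" "(p, q) \<in> PV V" and xr: "x \<in> XV_restr V xh"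
      and x0: "x (p, q) = 0" and g: "gamma1 V U U' i j x (p, q) = 1"
      unfolding Pab_def by (cases e) auto
    define y where "y = dicut_map (V - U) U (dicut_map U' (V - U') x)"
    have ny: "xval x i j \<noteq> 1" using g x0 unfolding gamma1_def by (auto split: if_splits)
    hence g2: "join_map V i j y (p, q) = 1" using g unfolding gamma1_def gamma_def y_def by simp
    have yle: "\<And>a b. y (a, b) = 1 \<Longrightarrow> x (a, b) = 1"
      unfolding y_def dicut_map_def by (auto split: if_splits)
    have ypq: "y (p, q) = 0" using x0 unfolding y_def dicut_map_def by auto
    have c: "xval y p i = 1" "xval y j q = 1"
    proof -
      have "join_map V i j y (p, q) = (if (p, q) \<in> PV V \<and> xval y p i = 1 \<and> xval y j q = 1
                                 then 1 else y (p, q))" unfolding join_map_def by simp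
      with g2 ypq have "(p, q) \<in> PV V \<and> xval y p i = 1 \<and> xval y j q = 1"
        by (metis zero_neq_one)
      then show "xval y p i = 1" "xval y j q = 1" by simp_all
    qed
    have pU: "p \<in> U"
    proof (cases "p = i")
      case False
      then have "y (p, i) = 1" using c unfolding xval_def by simp
      then show ?thesis using assms(6) e(2) unfolding y_def dicut_map_def PV_def
        by (auto split: if_splits)
    qed (use assms in auto)
    have qU: "q \<in> U'"
    proof (cases "q = j")
      case False
      then have "y (j, q) = 1" using c unfolding xval_def by simp
      then show ?thesis using assms(7) e(2) unfolding y_def dicut_map_def PV_def
        by (auto split: if_splits)
    qed (use assms in auto)
    have xd: "\<And>f v. xh f = Some v \<Longrightarrow> x f = v" using xr unfolding XV_restr_def by force
    have pi: "pval xh p i \<noteq> Some 0"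
    proof (cases "p = i")
      case False
      then have "x (p, i) = 1" using c yle unfolding xval_def by simp
      then show ?thesis using False xd unfolding pval_def by force
    qed (simp add: pval_def)
    have jq: "pval xh j q \<noteq> Some 0"
    proof (cases "q = j")
      case False
      then have "x (j, q) = 1" using c yle unfolding xval_def by simp
      then show ?thesis using False xd unfolding pval_def by force
    qed (simp add: pval_def)
    have "xh (p, q) \<noteq> Some 1" using xd x0 by force
    then show "e \<in> {(p, q). (p, q) \<in> U \<times> U' \<and> pval xh p i \<noteq> Some 0 \<and> pval xh j q \<noteq> Some 0}
             - {e. xh e = Some 1}" using e pU qU pi jq by auto
  qed
next
  show "Pab V xh 1 0 (gamma1 V U U' i j) \<subseteq>
           ((V - (U \<union> U')) \<times> U \<union> U' \<times> U \<union> U' \<times> (V - (U \<union> U')))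
             - {e. xh e = Some 0}"
  proof
    fix e assume "e \<in> Pab V xh 1 0 (gamma1 V U U' i j)"
    then obtain p q x where e: "e = (p, q)" "(p, q) \<in> PV V" and xr: "x \<in> XV_restr V xh"
      and x1: "x (p, q) = 1" and g: "gamma1 V U U' i j x (p, q) = 0"
      unfolding Pab_def by (cases e) auto
    define y where "y = dicut_map (V - U) U (dicut_map U' (V - U') x)"
    have ny: "xval x i j \<noteq> 1" using g x1 unfolding gamma1_def by (auto split: if_splits)
    hence g2: "join_map V i j y (p, q) = 0" using g unfolding gamma1_def gamma_def y_def by simp
    have "y (p, q) = 0" using g2 unfolding join_map_def by (auto split: if_splits)
    hence "(p, q) \<in> (V - U) \<times> U \<or> (p, q) \<in> U' \<times> (V - U')"
      using x1 unfolding y_def dicut_map_def by (auto split: if_splits)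
    moreover have "p \<in> V" "q \<in> V" using e(2) unfolding PV_def by auto
    ultimately have "(p, q) \<in> (V - (U \<union> U')) \<times> U \<union> U' \<times> U \<union> U' \<times> (V - (U \<union> U'))"
      by blast
    moreover have "xh (p, q) \<noteq> Some 0"
    proof
      assume "xh (p, q) = Some 0"
      then have "x (p, q) = 0" using xr unfolding XV_restr_def by force
      then show False using x1 by simp
    qed
    ultimately show "e \<in> ((V - (U \<union> U')) \<times> U \<union> U' \<times> U \<union> U' \<times> (V - (U \<union> U')))
             - {e. xh e = Some 0}" using e by blast
  qed
qed

end
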